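(* Fix integers $m \ge 1$ and $n_1,\dots,n_m \ge 2$, and consider the $m$-dimensional single parity-check product code transmitted over the binary erasure channel with erasure probability $\epsilon \in [0,1]$. Let $P_{\mathrm{SC}}$ be its block error probability under successive cancellation decoding and $P_{\mathrm{E}}$ its block error probability under Elias' decoding (both defined in the context). Then \[ P_{\mathrm{SC}} \le P_{\mathrm{E}}. \]
   Context: Index set and code. Let $A = \{1,\dots,n_1\}\times\cdots\times\{1,\dots,n_m\}$. The code is the set of binary arrays $x: A \to \{0,1\}$ in which every line in every direction $\ell$ has even weight; a line in direction $\ell$ is obtained by fixing all coordinates except the $\ell$-th. This is the product of the $(n_\ell, n_\ell-1)$ single parity-check codes. Its information positions are $A_{\mathrm{info}} = \{a : a_\ell \le n_\ell-1 \text{ for all } \ell\}$. Channel. Each entry is independently erased with probability $\epsilon$ and otherwise received correctly. Notation. For $\ell = 0,\dots,m$ let $A_\ell = \{a \in A : a_i \le n_i-1 \text{ for } i \le \ell\}$. For $a \in A$ and $b \in \{1,\dots,n_\ell\}$, let $a[\ell\leftarrow b]$ denote $a$ with its $\ell$-th coordinate replaced by $b$. Set $E_0(a) = S_0(a) = $ "entry $a$ is not erased". Elias' decoder. This is a one-sweep decoder over dimensions $1,\dots,m$. For $\ell \ge 1$ and $a \in A_\ell$, $E_\ell(a)$ is true iff $E_{\ell-1}(a)$ is true, or $E_{\ell-1}(a[\ell\leftarrow b])$ is true for all $b \in \{1,\dots,n_\ell\}\setminus\{a_\ell\}$. Then $P_{\mathrm{E}} = \Pr[\exists\, a \in A_{\mathrm{info}}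 : E_m(a) \text{ false}]$. Successive cancellation decoder. Information bits are decoded in lexicographic order of $(a_1,\dots,a_m)$, and local SPC decisions exploit previously decided bits; over the erasure channel decisions are never wrong, only erased. Its block error event coincides with the following. For $\ell \ge 1$ and $a \in A_\ell$, $S_\ell(a)$ is true iff $S_{\ell-1}(a)$ is true, or $S_{\ell-1}(a[\ell\leftarrow b])$ is true for all $b$ with $a_\ell < b \le n_\ell$. Then $P_{\mathrm{SC}} = \Pr[\exists\, a \in A_{\mathrm{info}} : S_m(a) \text{ false}]$. *)

theory Defs
  imports "HOL-Library.FuncSet" Complex_Main
begin

(* Index set A = {1..n_1} x ... x {1..n_m}, coordinates indexed 1..m,
   represented as extensional functions on {1..m}. *)
definition idx :: "nat \<Rightarrow> (nat \<Rightarrow> nat) \<Rightarrow> (nat \<Rightarrow> nat) set" where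
  "idx m n = PiE {1..m} (\<lambda>i. {1..n i})"

definition A_lev :: "nat \<Rightarrow> (nat \<Rightarrow> nat) \<Rightarrow> nat \<Rightarrow> (nat \<Rightarrow> nat) set" where
  "A_lev m n l = {a \<in> idx m n. \<forall>i\<in>{1..l}. a i \<le> n i - 1}"

definition A_info :: "nat \<Rightarrow> (nat \<Rightarrow> nat) \<Rightarrow> (nat \<Rightarrow> nat) set" where
  "A_info m n = A_lev m n m"

fun E_dec :: "(nat \<Rightarrow> nat) \<Rightarrow> (nat \<Rightarrow> nat) set \<Rightarrow> nat \<Rightarrow> (nat \<Rightarrow> nat) \<Rightarrow> bool" where
  "E_dec n er 0 a = (a \<notin> er)"
| "E_dec n er (Suc l) a =
     (E_dec n er l a \<or>
      (\<forall>b\<in>{1..n (Suc l)} - {a (Suc l)}. E_dec n er l (a(Suc l := b))))"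

fun S_dec :: "(nat \<Rightarrow> nat) \<Rightarrow> (nat \<Rightarrow> nat) set \<Rightarrow> nat \<Rightarrow> (nat \<Rightarrow> nat) \<Rightarrow> bool" where
  "S_dec n er 0 a = (a \<notin> er)"
| "S_dec n er (Suc l) a =
     (S_dec n er l a \<or>
      (\<forall>b\<in>{a (Suc l)<..n (Suc l)}. S_dec n er l (a(Suc l := b))))"

definition erasure_prob ::
  "nat \<Rightarrow> (nat \<Rightarrow> nat) \<Rightarrow> real \<Rightarrow> ((nat \<Rightarrow> nat) set \<Rightarrow> bool) \<Rightarrow> real" where
  "erasure_prob m n eps P =
     (\<Sum>er\<in>Pow (idx m n).
        (if P er then eps ^ card er * (1 - eps) ^ (card (idx m n) - card er) else 0))"

definition P_E :: "nat \<Rightarrow> (nat \<Rightarrow> nat) \<Rightarrow> real \<Rightarrow> real" where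
  "P_E m n eps = erasure_prob m n eps (\<lambda>er. \<exists>a\<in>A_info m n. \<not> E_dec n er m a)"

definition P_SC :: "nat \<Rightarrow> (nat \<Rightarrow> nat) \<Rightarrow> real \<Rightarrow> real" where
  "P_SC m n eps = erasure_prob m n eps (\<lambda>er. \<exists>a\<in>A_info m n. \<not> S_dec n er m a)"

end

theory Submission
  imports Defs
begin

lemma E_imp_S: "E_dec n er l a \<Longrightarrow> S_dec n er l a"
proof (induction l arbitrary: a)
  case 0 then show ?case by simp
next
  case (Suc l)
  show ?case
  proof (cases "E_dec n er l a")
    case True then show ?thesis using Suc.IH by simp
  next
    case False
    then have H: "\<forall>b\<in>{1..n (Suc l)} - {a (Suc l)}. E_dec n er l (a(Suc l := b))"
      using Suc.prems by simp
    have "\<forall>b\<in>{a (Suc l)<..n (Suc l)}. S_dec n er l (a(Suc l := b))"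
    proof
      fix b assume "b \<in> {a (Suc l)<..n (Suc l)}"
      then have "b \<in> {1..n (Suc l)} - {a (Suc l)}" by auto
      then show "S_dec n er l (a(Suc l := b))" using H Suc.IH by blast
    qed
    then show ?thesis by simp
  qed
qed

theorem theorem2:
  fixes m :: nat and n :: "nat \<Rightarrow> nat" and eps :: real
  assumes "m \<ge> 1"
    and "\<forall>i\<in>{1..m}. n i \<ge> 2"
    and "0 \<le> eps" and "eps \<le> 1"
  shows "P_SC m n eps \<le> P_E m n eps"
  unfolding P_SC_def P_E_def erasure_prob_def
proof (rule sum_mono)
  fix er assume "er \<in> Pow (idx m n)"
  have nn: "0 \<le> eps ^ card er * (1 - eps) ^ (card (idx m n) - card er)"
    using assms(3,4) by simp
  show "(if \<exists>a\<in>A_info m n. \<not> S_dec n er m a then eps ^ card er * (1 - eps) ^ (card (idx m n) - card er) else 0)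
    \<le> (if \<exists>a\<in>A_info m n. \<not> E_dec n er m a then eps ^ card er * (1 - eps) ^ (card (idx m n) - card er) else 0)"
    using nn E_imp_S by auto
qed

end
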